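(* For every positive integer $n$, $$n^2-1\ \Big|\ \sum_{k=0}^{n-1}\binom{n-1}{k}\binom{-n-1}{k}C_k3^{n-1-k}a(n,k),$$ where $$a(n,k)=4k^2n^2-8kn^3-14k^2n-14kn^2-4n^3+13k^2-11kn-26n^2+39k+4n+26.$$
   Context: $C_k=\binom{2k}{k}/(k+1)$; $\binom{x}{k}=x(x-1)\cdots(x-k+1)/k!$ for any integer $x$. Divisibility by $0$ means the quantity equals $0$. *)

theory Defs
  imports Main
begin

definition binomZ :: "int \<Rightarrow> nat \<Rightarrow> int" where
  "binomZ x k = (\<Prod>i<k. x - int i) div int (fact k)"

definition catalan :: "nat \<Rightarrow> int" where
  "catalan k = int ((2*k) choose k) div int (k+1)"

definition a_coef :: "int \<Rightarrow> int \<Rightarrow> int" where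
  "a_coef n k = 4*k^2*n^2 - 8*k*n^3 - 14*k^2*n - 14*k*n^2 - 4*n^3 + 13*k^2
      - 11*k*n - 26*n^2 + 39*k + 4*n + 26"

end

theory Submission
  imports Defs
begin

lemma prodP1: "(\<Prod>i<k. int m - int i) = int (fact k * (m choose k))"
proof (induction k)
  case 0
  then show ?case by simp
next
  case (Suc k)
  have e: "Suc k * (m choose Suc k) = (m - k) * (m choose k)"
    using binomial_absorption[of k m] binomial_absorb_comp[of m k] by simp
  have "(\<Prod>i<Suc k. int m - int i) = int (fact k * (m choose k)) * (int m - int k)"
    using Suc by simp
  also have "\<dots> = int (fact k * (m choose k) * (m - k))"
  proof (cases "k \<le> m")
    case True
    then show ?thesis by (simp add: of_nat_diff)
  next
    case False
    then show ?thesis by (simp add: binomial_eq_0)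
  qed
  also have "fact k * (m choose k) * (m - k) = fact (Suc k) * (m choose Suc k)"
  proof -
    have "fact (Suc k) * (m choose Suc k) = fact k * (Suc k * (m choose Suc k))"
      by (simp only: fact_Suc of_nat_id mult.assoc mult.commute mult.left_commute)
    also have "\<dots> = fact k * ((m - k) * (m choose k))" using e by simp
    finally show ?thesis by (simp only: mult.assoc mult.commute mult.left_commute)
  qed
  finally show ?case .
qed

lemma prodP2: "(\<Prod>i<k. - int m - 1 - int i) = (-1)^k * int (fact k * ((m + k) choose k))"
proof (induction k)
  case 0
  then show ?case by simp
next
  case (Suc k)
  have e: "Suc k * (Suc (m + k) choose Suc k) = Suc (m + k) * ((m + k) choose k)"
    by (rule Suc_times_binomial)
  have "(\<Prod>i<Suc k. - int m - 1 - int i) = (-1)^k * int (fact k * ((m + k) choose k)) * (- int m - 1 - int k)"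
    using Suc by simp
  also have "\<dots> = (-1)^(Suc k) * int (fact k * ((m + k) choose k) * Suc (m + k))"
    by (simp add: algebra_simps)
  also have "fact k * ((m + k) choose k) * Suc (m + k) = fact (Suc k) * ((m + Suc k) choose Suc k)"
  proof -
    have "fact (Suc k) * ((m + Suc k) choose Suc k) = fact k * (Suc k * (Suc (m + k) choose Suc k))"
      by (simp only: fact_Suc of_nat_id mult.assoc mult.commute mult.left_commute add_Suc_right)
    also have "\<dots> = fact k * (Suc (m + k) * ((m + k) choose k))" using e by simp
    finally show ?thesis by (simp only: mult.assoc mult.commute mult.left_commute)
  qed
  finally show ?case .
qed

lemma binomZ_pos: "n \<ge> 1 \<Longrightarrow> binomZ (int n - 1) k = int ((n - 1) choose k)"
proof -
  assume "n \<ge> 1"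
  then have eq: "int n - 1 = int (n - 1)" by simp
  have "binomZ (int n - 1) k = int (fact k * ((n - 1) choose k)) div int (fact k)"
    by (simp only: binomZ_def eq prodP1)
  also have "\<dots> = int (fact k) * int ((n - 1) choose k) div int (fact k)"
    by (simp only: of_nat_mult)
  also have "\<dots> = int ((n - 1) choose k)"
    by (rule nonzero_mult_div_cancel_left) simp
  finally show ?thesis .
qed

lemma binomZ_neg: "binomZ (- int n - 1) k = (-1)^k * int ((n + k) choose k)"
proof -
  have "binomZ (- int n - 1) k = ((-1)^k * int (fact k * ((n + k) choose k))) div int (fact k)"
    by (simp only: binomZ_def prodP2)
  also have "\<dots> = int (fact k) * ((-1)^k * int ((n + k) choose k)) div int (fact k)"
    by (simp only: of_nat_mult mult.left_commute)
  also have "\<dots> = (-1)^k * int ((n + k) choose k)"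
    by (rule nonzero_mult_div_cancel_left) simp
  finally show ?thesis .
qed

lemma key:
  fixes n k :: nat
  assumes "n \<ge> 1"
  shows "(int n ^ 2 - 1) dvd (int ((n - 1) choose k) * int ((n + k) choose k) * a_coef (int n) (int k))"
proof -
  define A where "A = int ((n - 1) choose k)"
  define B where "B = int ((n + k) choose k)"
  obtain A' where hA: "int k * A = (int n - 1) * A'"
  proof (cases "k = 0")
    case True then show ?thesis using that[of 0] by simp
  next
    case False
    have "k * ((n - 1) choose k) = (n - 1) * ((n - 1 - 1) choose (k - 1))"
      using times_binomial_minus1_eq[of k "n - 1"] False by simp
    then have "int k * A = int (n - 1) * int ((n - 1 - 1) choose (k - 1))"
      unfolding A_def by (metis of_nat_mult)
    moreover have "int (n - 1) = int n - 1" using assms by simp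
    ultimately show ?thesis using that by metis
  qed
  obtain B' where hB: "int k * B = (int n + 1) * B'"
  proof (cases "k = 0")
    case True then show ?thesis using that[of 0] by simp
  next
    case False
    have "Suc (k - 1) * (Suc ((k - 1) + n) choose Suc (k - 1)) = Suc n * (Suc ((k - 1) + n) choose (k - 1))"
      by (rule Suc_times_binomial_add)
    then have "k * ((n + k) choose k) = Suc n * ((n + k) choose (k - 1))"
      using False by (simp add: add.commute)
    then have "int k * B = int (Suc n) * int ((n + k) choose (k - 1))"
      unfolding B_def by (metis of_nat_mult)
    then show ?thesis using that[of "int ((n + k) choose (k - 1))"] by (simp add: add.commute)
  qed
  define N where "N = int n"
  define K where "K = int k"
  have hA2: "K * A = (N - 1) * A'" using hA N_def K_def by simp
  have hB2: "K * B = (N + 1) * B'" using hB N_def K_def by simp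
  have id: "A * B * a_coef N K =
     (4*N^2-14*N+13) * (K*A) * (K*B) + 3*(N+1)*(K*A)*B - 22*(N-1)*A*(K*B)
     - (N^2 - 1) * A * B * (K*(8*N+14) + 4*N+26)"
    unfolding a_coef_def by (simp add: algebra_simps power2_eq_square power3_eq_cube)
  also have "\<dots> = (N^2 - 1) * ((4*N^2-14*N+13) * A' * B' + 3 * A' * B - 22 * A * B'
     - A * B * (K*(8*N+14) + 4*N+26))"
    unfolding hA2 hB2 by (simp add: algebra_simps power2_eq_square)
  finally show ?thesis unfolding A_def B_def N_def K_def by (metis dvd_triv_left)
qed

theorem lemma3p3:
  fixes n :: nat
  assumes "n \<ge> 1"
  shows "(int n ^ 2 - 1) dvd
    (\<Sum>k=0..n-1. binomZ (int n - 1) k * binomZ (- int n - 1) k * catalan k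
        * 3 ^ (n - 1 - k) * a_coef (int n) (int k))"
proof (rule dvd_sum)
  fix k assume "k \<in> {0..n-1}"
  have "binomZ (int n - 1) k * binomZ (- int n - 1) k * catalan k
        * 3 ^ (n - 1 - k) * a_coef (int n) (int k)
      = (int ((n - 1) choose k) * int ((n + k) choose k) * a_coef (int n) (int k))
        * ((-1)^k * catalan k * 3 ^ (n - 1 - k))"
    using assms by (simp add: binomZ_pos binomZ_neg algebra_simps)
  then show "(int n ^ 2 - 1) dvd binomZ (int n - 1) k * binomZ (- int n - 1) k * catalan k
        * 3 ^ (n - 1 - k) * a_coef (int n) (int k)"
    using key[OF assms, of k] by (metis dvd_mult2)
qed

end
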